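(* Let $c\ge2$ and let $\Gamma=(V,E)$ be a $c$-uniform unoriented hypergraph with $E\ne\varnothing$ and no isolated vertices, with smallest normalized Laplacian eigenvalue $\lambda_1$ and strong coloring number $\chi$. If $\chi=\dfrac{c-\lambda_1}{1-\lambda_1}$, then for every proper strong $\chi$-coloring with color classes $V_1,\dots,V_\chi$, for all $v\in V$ and all $1\le i\le\chi$, \[ \bigl|\{e\in E: v\in e,\ e\cap V_i\neq\varnothing\}\bigr|=\begin{cases}\dfrac{(c-1)\deg v}{\chi-1}, & v\notin V_i,\\[2mm] \deg v, & v\in V_i.\end{cases} \]
   Context: A hypergraph has finite vertex set $V$ and edge set $E\subseteq\mathcal P(V)$; it is $c$-uniform if $|e|=c$ for all $e$, and unoriented means all incidences have orientation $+1$. $\deg v=|\{e\in E: v\in e\}|\ge1$, $D=\mathrm{diag}(\deg v)$, adjacency $A_{v,v}=0$ and $A_{v,w}=-|\{e\in E: v,w\in e\}|$ for $v\ne w$, normalized Laplacian $L=\mathrm{Id}-D^{-1}A$ with eigenvalues $\lambda_1\le\dots\le\lambda_N$. A proper strong $k$-coloring is a map $V\to\{1,\dots,k\}$ such that any two distinct vertices in a common edge receive different colors; $\chi$ is the least such $k$. *)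

theory Defs
  imports Complex_Main
begin

definition hypergraph :: "'a set \<Rightarrow> 'a set set \<Rightarrow> bool" where
  "hypergraph V E \<longleftrightarrow> finite V \<and> E \<subseteq> Pow V"

definition uniform :: "nat \<Rightarrow> 'a set set \<Rightarrow> bool" where
  "uniform c E \<longleftrightarrow> (\<forall>e\<in>E. card e = c)"

definition hdeg :: "'a set set \<Rightarrow> 'a \<Rightarrow> nat" where
  "hdeg E v = card {e\<in>E. v \<in> e}"

definition hadj :: "'a set set \<Rightarrow> 'a \<Rightarrow> 'a \<Rightarrow> real" where
  "hadj E v w = (if v = w then 0 else - real (card {e\<in>E. v \<in> e \<and> w \<in> e}))"

definition laplacian :: "'a set \<Rightarrow> 'a set set \<Rightarrow> ('a \<Rightarrow> real) \<Rightarrow> 'a \<Rightarrow> real" where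
  "laplacian V E f v = f v - (\<Sum>w\<in>V. hadj E v w * f w) / real (hdeg E v)"

definition is_eigenvalue :: "'a set \<Rightarrow> 'a set set \<Rightarrow> real \<Rightarrow> bool" where
  "is_eigenvalue V E l \<longleftrightarrow>
     (\<exists>f. (\<exists>v\<in>V. f v \<noteq> 0) \<and> (\<forall>v\<in>V. laplacian V E f v = l * f v))"

text \<open>Smallest eigenvalue \<lambda>_1 (L is similar to a symmetric matrix, so all eigenvalues are real).\<close>
definition lambda_min :: "'a set \<Rightarrow> 'a set set \<Rightarrow> real" where
  "lambda_min V E = Min {l. is_eigenvalue V E l}"

definition proper_strong_coloring :: "'a set \<Rightarrow> 'a set set \<Rightarrow> nat \<Rightarrow> ('a \<Rightarrow> nat) \<Rightarrow> bool" where
  "proper_strong_coloring V E k col \<longleftrightarrow>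
     (\<forall>v\<in>V. col v \<in> {1..k}) \<and>
     (\<forall>e\<in>E. \<forall>v\<in>e. \<forall>w\<in>e. v \<noteq> w \<longrightarrow> col v \<noteq> col w)"

definition strong_chromatic :: "'a set \<Rightarrow> 'a set set \<Rightarrow> nat" where
  "strong_chromatic V E = (LEAST k. \<exists>col. proper_strong_coloring V E k col)"

end

theory Submission
  imports Defs "HOL-Analysis.Analysis" "HOL-Library.Function_Algebras"
begin

lemma inc_swap:
  assumes "finite V" "E \<subseteq> Pow V"
  shows "(\<Sum>v\<in>V. \<Sum>e\<in>{e\<in>E. v \<in> e}. F v e) = (\<Sum>e\<in>E. \<Sum>v\<in>e. F v e)"
proof -
  have fE: "finite E" using assms by (meson finite_Pow_iff finite_subset)
  have "(\<Sum>v\<in>V. \<Sum>e\<in>{e\<in>E. v \<in> e}. F v e) = (\<Sum>v\<in>V. \<Sum>e\<in>E. if v \<in> e then F v e else 0)"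
    using fE by (simp add: sum.inter_filter)
  also have "\<dots> = (\<Sum>e\<in>E. \<Sum>v\<in>V. if v \<in> e then F v e else 0)" by (rule sum.swap)
  also have "\<dots> = (\<Sum>e\<in>E. \<Sum>v\<in>{v\<in>V. v \<in> e}. F v e)"
    using assms by (simp add: sum.inter_filter)
  also have "\<dots> = (\<Sum>e\<in>E. \<Sum>v\<in>e. F v e)"
    apply (rule sum.cong, simp)
    using assms(2) by (intro sum.cong) auto
  finally show ?thesis .
qed

definition sE :: "('a \<Rightarrow> real) \<Rightarrow> 'a set \<Rightarrow> real" where
  "sE f e = (\<Sum>w\<in>e. f w)"

lemma lap_formula:
  assumes "finite V" "E \<subseteq> Pow V" "v \<in> V" "hdeg E v \<ge> 1"
  shows "real (hdeg E v) * laplacian V E f v = (\<Sum>e\<in>{e\<in>E. v \<in> e}. sE f e)"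
proof -
  have fE: "finite E" using assms by (meson finite_Pow_iff finite_subset)
  define N where "N w = real (card {e\<in>E. v \<in> e \<and> w \<in> e})" for w
  have "(\<Sum>e\<in>{e\<in>E. v \<in> e}. sE f e) = (\<Sum>e\<in>{e\<in>E. v \<in> e}. \<Sum>w\<in>V. if w \<in> e then f w else 0)"
    unfolding sE_def
  proof (rule sum.cong, simp)
    fix e assume "e \<in> {e\<in>E. v \<in> e}"
    then have "e \<subseteq> V" using assms(2) by auto
    have "(\<Sum>w\<in>V. if w \<in> e then f w else 0) = (\<Sum>w\<in>{w\<in>V. w \<in> e}. f w)"
      by (rule sum.inter_filter[symmetric]) (use assms(1) in simp)
    also have "{w\<in>V. w \<in> e} = e" using \<open>e \<subseteq> V\<close> by auto
    finally show "(\<Sum>w\<in>e. f w) = (\<Sum>w\<in>V. if w \<in> e then f w else 0)" by simp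
  qed
  also have "\<dots> = (\<Sum>w\<in>V. \<Sum>e\<in>{e\<in>E. v \<in> e}. if w \<in> e then f w else 0)" by (rule sum.swap)
  also have "\<dots> = (\<Sum>w\<in>V. N w * f w)"
  proof (rule sum.cong, simp)
    fix w assume "w \<in> V"
    have "(\<Sum>e\<in>{e\<in>E. v \<in> e}. if w \<in> e then f w else 0) = (\<Sum>e\<in>{e\<in>{e\<in>E. v \<in> e}. w \<in> e}. f w)"
      by (rule sum.inter_filter[symmetric]) (use fE in simp)
    also have "{e\<in>{e\<in>E. v \<in> e}. w \<in> e} = {e\<in>E. v \<in> e \<and> w \<in> e}" by auto
    finally show "(\<Sum>e\<in>{e\<in>E. v \<in> e}. if w \<in> e then f w else 0) = N w * f w"
      by (simp add: N_def)
  qed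
  also have "\<dots> = N v * f v + (\<Sum>w\<in>V - {v}. N w * f w)"
    using assms by (meson sum.remove)
  also have "N v = real (hdeg E v)" unfolding N_def hdeg_def by simp
  also have "(\<Sum>w\<in>V - {v}. N w * f w) = - (\<Sum>w\<in>V. hadj E v w * f w)"
  proof -
    have "(\<Sum>w\<in>V. hadj E v w * f w) = hadj E v v * f v + (\<Sum>w\<in>V - {v}. hadj E v w * f w)"
      using assms by (meson sum.remove)
    also have "\<dots> = (\<Sum>w\<in>V - {v}. hadj E v w * f w)" by (simp add: hadj_def)
    also have "\<dots> = (\<Sum>w\<in>V - {v}. - (N w * f w))"
      by (rule sum.cong) (auto simp: hadj_def N_def)
    finally show ?thesis by (simp add: sum_negf)
  qed
  finally have X: "(\<Sum>e\<in>{e\<in>E. v \<in> e}. sE f e) = real (hdeg E v) * f v + - (\<Sum>w\<in>V. hadj E v w * f w)" .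
  have "real (hdeg E v) \<noteq> 0" using assms(4) by simp
  then show ?thesis unfolding X laplacian_def by (simp add: right_diff_distrib)
qed


definition Qf :: "'a set set \<Rightarrow> ('a \<Rightarrow> real) \<Rightarrow> real" where
  "Qf E f = (\<Sum>e\<in>E. (sE f e)^2)"

definition Df :: "'a set \<Rightarrow> 'a set set \<Rightarrow> ('a \<Rightarrow> real) \<Rightarrow> real" where
  "Df V E f = (\<Sum>v\<in>V. real (hdeg E v) * (f v)^2)"

lemma quad_zero:
  fixes K M :: real
  assumes "\<And>t. 2*t*K + t^2*M \<ge> 0"
  shows "K = 0"
proof -
  define P where "P = \<bar>M\<bar> + 1"
  have P: "P \<ge> 1" unfolding P_def by simp
  have "2*(-K/P)*K + (-K/P)^2*M \<ge> 0" by (rule assms)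
  then have "P^2 * (2*(-K/P)*K + (-K/P)^2*M) \<ge> 0" by simp
  moreover have "P^2 * (2*(-K/P)*K + (-K/P)^2*M) = K^2 * (M - 2*P)"
    using P by (simp add: field_simps power2_eq_square)
  ultimately have "K^2 * (M - 2*P) \<ge> 0" by simp
  moreover have "M - 2*P < 0" unfolding P_def by (cases "M \<ge> 0") auto
  ultimately have "K^2 \<le> 0" by (smt (verit) mult_pos_neg zero_less_power2)
  then show ?thesis by simp
qed

lemma sq_expand:
  fixes a b :: "'b \<Rightarrow> real"
  shows "(\<Sum>x\<in>S. c x * (a x + t * b x)^2) = (\<Sum>x\<in>S. c x * (a x)^2) + 2*t*(\<Sum>x\<in>S. c x * a x * b x) + t^2 * (\<Sum>x\<in>S. c x * (b x)^2)"
  by (simp add: power2_eq_square algebra_simps sum.distrib sum_distrib_left)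

lemma variational:
  assumes fin: "finite V" and EV: "E \<subseteq> Pow V"
    and ge: "\<And>f. Qf E f \<ge> l * Df V E f"
    and eq: "Qf E g = l * Df V E g"
    and v: "v \<in> V"
  shows "(\<Sum>e\<in>{e\<in>E. v \<in> e}. sE g e) = l * real (hdeg E v) * g v"
proof -
  have fE: "finite E" using fin EV by (meson finite_Pow_iff finite_subset)
  define h where "h x = (if x = v then 1 else (0::real))" for x
  define A where "A = (\<Sum>e\<in>{e\<in>E. v \<in> e}. sE g e)"
  define d where "d = real (hdeg E v)"
  have sEh: "sE (\<lambda>x. g x + t * h x) e = sE g e + t * (if v \<in> e then 1 else 0)" if "e \<in> E" for e t
  proof -
    have "finite e" using that EV fin by (meson PowD finite_subset subsetD)
    then show ?thesis unfolding sE_def h_def by (simp add: sum.distrib sum_distrib_left[symmetric])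
  qed
  have Q: "Qf E (\<lambda>x. g x + t * h x) = Qf E g + 2*t*A + t^2 * d" for t
  proof -
    have "Qf E (\<lambda>x. g x + t * h x) = (\<Sum>e\<in>E. 1 * (sE g e + t * (if v \<in> e then 1 else 0))^2)"
      unfolding Qf_def by (rule sum.cong) (auto simp: sEh)
    also have "\<dots> = (\<Sum>e\<in>E. 1 * (sE g e)^2) + 2*t*(\<Sum>e\<in>E. 1 * sE g e * (if v \<in> e then 1 else 0))
        + t^2 * (\<Sum>e\<in>E. 1 * (if v \<in> e then 1 else (0::real))^2)" by (rule sq_expand)
    also have "(\<Sum>e\<in>E. 1 * sE g e * (if v \<in> e then 1 else 0)) = A"
      unfolding A_def by (simp add: sum.inter_filter[OF fE, symmetric] if_distrib cong: if_cong)
    also have "(\<Sum>e\<in>E. 1 * (if v \<in> e then 1 else (0::real))^2) = d"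
    proof -
      have "(\<Sum>e\<in>E. 1 * (if v \<in> e then 1 else (0::real))^2) = (\<Sum>e\<in>E. if v \<in> e then 1 else 0)"
        by (rule sum.cong) auto
      also have "\<dots> = (\<Sum>e\<in>{e\<in>E. v \<in> e}. 1)" using sum.inter_filter[OF fE, of "\<lambda>_. (1::real)" "\<lambda>e. v \<in> e"] by simp
      finally show ?thesis unfolding d_def hdeg_def by simp
    qed
    finally show ?thesis unfolding Qf_def by simp
  qed
  have D: "Df V E (\<lambda>x. g x + t * h x) = Df V E g + 2*t*(d * g v) + t^2 * d" for t
  proof -
    have "Df V E (\<lambda>x. g x + t * h x) = Df V E g + 2*t*(\<Sum>x\<in>V. real (hdeg E x) * g x * h x)
        + t^2 * (\<Sum>x\<in>V. real (hdeg E x) * (h x)^2)"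
      unfolding Df_def by (rule sq_expand)
    also have "(\<Sum>x\<in>V. real (hdeg E x) * g x * h x) = d * g v"
      using fin v unfolding h_def d_def by (simp add: if_distrib cong: if_cong)
    also have "(\<Sum>x\<in>V. real (hdeg E x) * (h x)^2) = (\<Sum>x\<in>V. if x = v then real (hdeg E x) else 0)"
      by (rule sum.cong) (auto simp: h_def)
    also have "\<dots> = d" using fin v unfolding d_def by simp
    finally show ?thesis .
  qed
  have "2*t*(A - l*d*g v) + t^2*(d*(1-l)) \<ge> 0" for t
  proof -
    have "Qf E (\<lambda>x. g x + t * h x) \<ge> l * Df V E (\<lambda>x. g x + t * h x)" by (rule ge)
    then have "Qf E g + 2*t*A + t^2 * d \<ge> l * (Df V E g + 2*t*(d * g v) + t^2 * d)" by (simp only: Q D)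
    then show ?thesis using eq by (simp add: algebra_simps)
  qed
  then have "A - l*d*g v = 0" using quad_zero[of "A - l*d*g v" "d*(1-l)"] by (simp add: mult.assoc)
  then show ?thesis unfolding A_def d_def by simp
qed

lemma lap_sym:
  assumes "finite V" "E \<subseteq> Pow V" "\<forall>v\<in>V. hdeg E v \<ge> 1"
  shows "(\<Sum>v\<in>V. real (hdeg E v) * laplacian V E f v * g v) = (\<Sum>e\<in>E. sE f e * sE g e)"
proof -
  have "(\<Sum>v\<in>V. real (hdeg E v) * laplacian V E f v * g v) = (\<Sum>v\<in>V. \<Sum>e\<in>{e\<in>E. v \<in> e}. sE f e * g v)"
    using assms by (intro sum.cong) (auto simp: lap_formula sum_distrib_right)
  also have "\<dots> = (\<Sum>e\<in>E. \<Sum>v\<in>e. sE f e * g v)" using inc_swap[OF assms(1,2), of "\<lambda>v e. sE f e * g v"] by simp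
  also have "\<dots> = (\<Sum>e\<in>E. sE f e * sE g e)" by (simp add: sE_def sum_distrib_left)
  finally show ?thesis .
qed


lemma coord_cont [continuous_intros]: "continuous_on S (\<lambda>x::'a\<Rightarrow>real. x i)"
  by (rule continuous_on_subset[OF continuous_on_product_coordinates]) simp

lemma Df_nonneg: "Df V E f \<ge> 0"
  unfolding Df_def by (intro sum_nonneg) simp

lemma Qf_nonneg: "Qf E f \<ge> 0"
  unfolding Qf_def by (intro sum_nonneg) simp

lemma exists_min_eig:
  assumes fin: "finite V" and EV: "E \<subseteq> Pow V" and deg: "\<forall>v\<in>V. hdeg E v \<ge> 1" and ne: "V \<noteq> {}"
  shows "\<exists>\<mu>. is_eigenvalue V E \<mu> \<and> (\<forall>f. Qf E f \<ge> \<mu> * Df V E f)"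
proof -
  define S where "S x = (if x \<in> V then {-1..1} else {0::real})" for x
  define K where "K = PiE UNIV S \<inter> {f. Df V E f = 1}"
  have "compactin (product_topology (\<lambda>i. euclidean) UNIV) (PiE UNIV S)"
    unfolding compactin_PiE by (auto simp: S_def)
  then have cP: "compact (PiE UNIV S)" by (simp add: euclidean_product_topology)
  have contD: "continuous_on UNIV (Df V E)"
    unfolding Df_def by (intro continuous_intros)
  have contQ: "continuous_on K (Qf E)"
    unfolding Qf_def sE_def by (intro continuous_intros)
  have "closed {f. Df V E f = 1}"
    by (rule closed_Collect_eq[OF contD]) (intro continuous_intros)
  then have cK: "compact K" unfolding K_def using cP by blast
  have inK: "(\<lambda>x. if x \<in> V then f x else 0) \<in> K" if "Df V E f = 1" for f
  proof -
    have "\<bar>f x\<bar> \<le> 1" if "x \<in> V" for x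
    proof -
      have "(f x)^2 \<le> real (hdeg E x) * (f x)^2" using deg that
        by (simp add: mult_le_cancel_right1)
      also have "\<dots> \<le> Df V E f" unfolding Df_def
        by (rule member_le_sum) (use that fin in auto)
      finally have "(f x)^2 \<le> 1" using \<open>Df V E f = 1\<close> by simp
      then show ?thesis by (simp add: abs_square_le_1)
    qed
    moreover have "Df V E (\<lambda>x. if x \<in> V then f x else 0) = Df V E f"
      unfolding Df_def by (rule sum.cong) auto
    ultimately show ?thesis using that unfolding K_def S_def by (auto simp: PiE_iff abs_le_iff)
  qed
  obtain v0 where v0: "v0 \<in> V" using ne by auto
  define f0 where "f0 x = (if x = v0 then 1 / sqrt (real (hdeg E v0)) else 0)" for x
  have "Df V E f0 = 1"
  proof -
    have "Df V E f0 = (\<Sum>x\<in>V. if x = v0 then real (hdeg E v0) * (1 / sqrt (real (hdeg E v0)))^2 else 0)"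
      unfolding Df_def f0_def by (rule sum.cong) auto
    also have "\<dots> = 1" using v0 fin deg by (simp add: power_divide Suc_le_eq)
    finally show ?thesis .
  qed
  then have "K \<noteq> {}" using inK by blast
  then obtain g where gK: "g \<in> K" and gmin: "\<And>y. y \<in> K \<Longrightarrow> Qf E g \<le> Qf E y"
    using continuous_attains_inf[OF cK _ contQ] by blast
  define \<mu> where "\<mu> = Qf E g"
  have Dg: "Df V E g = 1" using gK unfolding K_def by simp
  have sEcong: "sE f e = sE f' e" if "e \<in> E" "\<And>x. x \<in> V \<Longrightarrow> f x = f' x" for f f' e
  proof -
    have "e \<subseteq> V" using that EV by auto
    then show ?thesis unfolding sE_def using that by (intro sum.cong) auto
  qed
  have lower: "Qf E f \<ge> \<mu> * Df V E f" for f
  proof (cases "Df V E f = 0")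
    case True
    then show ?thesis using Qf_nonneg by simp
  next
    case False
    then have pos: "Df V E f > 0" using Df_nonneg[of V E f] by simp
    define r where "r = sqrt (Df V E f)"
    have r: "r > 0" "r^2 = Df V E f" using pos unfolding r_def by auto
    define f' where "f' x = (if x \<in> V then f x / r else 0)" for x
    have "Df V E (\<lambda>x. f x / r) = Df V E f / r^2"
      unfolding Df_def by (simp add: power_divide sum_divide_distrib)
    then have "Df V E (\<lambda>x. f x / r) = 1" using r pos by simp
    then have "(\<lambda>x. if x \<in> V then f x / r else 0) \<in> K" by (rule inK)
    then have "\<mu> \<le> Qf E f'" unfolding \<mu>_def f'_def by (rule gmin)
    also have "Qf E f' = Qf E (\<lambda>x. f x / r)"
      unfolding Qf_def by (rule sum.cong[OF refl]) (metis (no_types, lifting) f'_def sEcong)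
    also have "\<dots> = Qf E f / r^2"
      unfolding Qf_def sE_def by (simp add: power_divide sum_divide_distrib[symmetric])
    finally have "\<mu> \<le> Qf E f / Df V E f" using r by simp
    then show ?thesis using pos by (simp add: field_simps)
  qed
  have eq: "Qf E g = \<mu> * Df V E g" using Dg \<mu>_def by simp
  have "laplacian V E g v = \<mu> * g v" if v: "v \<in> V" for v
  proof -
    have "real (hdeg E v) * laplacian V E g v = \<mu> * real (hdeg E v) * g v"
      using lap_formula[OF fin EV v] variational[OF fin EV lower eq v] deg v by simp
    moreover have "real (hdeg E v) \<noteq> 0" using deg v by auto
    ultimately show ?thesis by simp
  qed
  moreover have "\<exists>v\<in>V. g v \<noteq> 0"
  proof (rule ccontr)
    assume "\<not> ?thesis"
    then have "Df V E g = 0" unfolding Df_def by simp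
    then show False using Dg by simp
  qed
  ultimately have "is_eigenvalue V E \<mu>" unfolding is_eigenvalue_def by blast
  then show ?thesis using lower by blast
qed


lemma sum_fun_app: "(sum F T) x = (\<Sum>t\<in>T. (F t) x)" for F :: "'b \<Rightarrow> 'a \<Rightarrow> real"
  by (induction T rule: infinite_finite_induct) auto

lemma fun_vs: "vector_space (\<lambda>r (f::'a \<Rightarrow> real) x. r * f x)"
  by unfold_locales (auto simp: fun_eq_iff algebra_simps)

lemma lap_cong:
  assumes "\<And>x. x \<in> V \<Longrightarrow> f x = f' x" "v \<in> V"
  shows "laplacian V E f v = laplacian V E f' v"
  unfolding laplacian_def using assms by simp

definition ipD :: "'a set \<Rightarrow> 'a set set \<Rightarrow> ('a \<Rightarrow> real) \<Rightarrow> ('a \<Rightarrow> real) \<Rightarrow> real" where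
  "ipD V E f g = (\<Sum>v\<in>V. real (hdeg E v) * f v * g v)"

lemma eig_orth:
  assumes fin: "finite V" and EV: "E \<subseteq> Pow V" and deg: "\<forall>v\<in>V. hdeg E v \<ge> 1"
    and f: "\<forall>v\<in>V. laplacian V E f v = l * f v"
    and g: "\<forall>v\<in>V. laplacian V E g v = m * g v"
    and lm: "l \<noteq> m"
  shows "ipD V E f g = 0"
proof -
  have "l * ipD V E f g = (\<Sum>v\<in>V. real (hdeg E v) * laplacian V E f v * g v)"
    unfolding ipD_def using f by (simp add: sum_distrib_left algebra_simps)
  also have "\<dots> = (\<Sum>e\<in>E. sE f e * sE g e)" by (rule lap_sym[OF fin EV deg])
  also have "\<dots> = (\<Sum>e\<in>E. sE g e * sE f e)" by (simp add: mult.commute)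
  also have "\<dots> = (\<Sum>v\<in>V. real (hdeg E v) * laplacian V E g v * f v)" by (rule lap_sym[OF fin EV deg, symmetric])
  also have "\<dots> = m * ipD V E f g"
    unfolding ipD_def using g by (simp add: sum_distrib_left algebra_simps)
  finally have "(l - m) * ipD V E f g = 0" by (simp add: algebra_simps)
  then show ?thesis using lm by simp
qed

lemma ipD_pos:
  assumes fin: "finite V" and deg: "\<forall>v\<in>V. hdeg E v \<ge> 1" and "v \<in> V" "f v \<noteq> 0"
  shows "ipD V E f f > 0"
proof -
  have a: "real (hdeg E v) > 0" using assms by (simp add: Suc_le_eq)
  have b: "f v * f v > 0" using assms(4) not_real_square_gt_zero by blast
  have "0 < real (hdeg E v) * f v * f v" using mult_pos_pos[OF a b] by (simp add: mult.assoc)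
  also have "\<dots> \<le> ipD V E f f" unfolding ipD_def
    by (rule member_le_sum) (use assms in \<open>auto simp: mult.assoc\<close>)
  finally show ?thesis .
qed

lemma eig_finite:
  assumes fin: "finite V" and EV: "E \<subseteq> Pow V" and deg: "\<forall>v\<in>V. hdeg E v \<ge> 1"
  shows "finite {l. is_eigenvalue V E l}"
proof -
  interpret fvs: vector_space "(\<lambda>r (f::'a \<Rightarrow> real) x. r * f x)" by (rule fun_vs)
  define S where "S = {l. is_eigenvalue V E l}"
  define ev where "ev l = (SOME f. (\<exists>v\<in>V. f v \<noteq> 0) \<and> (\<forall>v\<in>V. laplacian V E f v = l * f v))" for l
  define \<phi> where "\<phi> l = (\<lambda>x. if x \<in> V then ev l x else 0)" for l
  have evp: "(\<exists>v\<in>V. ev l v \<noteq> 0) \<and> (\<forall>v\<in>V. laplacian V E (ev l) v = l * ev l v)" if "l \<in> S" for l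
  proof -
    have "\<exists>f. (\<exists>v\<in>V. f v \<noteq> 0) \<and> (\<forall>v\<in>V. laplacian V E f v = l * f v)"
      using that unfolding S_def is_eigenvalue_def by simp
    then show ?thesis unfolding ev_def by (rule someI_ex)
  qed
  have \<phi>p: "(\<exists>v\<in>V. \<phi> l v \<noteq> 0) \<and> (\<forall>v\<in>V. laplacian V E (\<phi> l) v = l * \<phi> l v)" if "l \<in> S" for l
  proof -
    have "laplacian V E (\<phi> l) v = laplacian V E (ev l) v" if "v \<in> V" for v
      by (rule lap_cong) (auto simp: \<phi>_def that)
    then show ?thesis using evp[OF that] by (auto simp: \<phi>_def)
  qed
  have pos: "ipD V E (\<phi> l) (\<phi> l) > 0" if "l \<in> S" for l
    using \<phi>p[OF that] ipD_pos[OF fin deg] by blast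
  have orth: "ipD V E (\<phi> l) (\<phi> m) = 0" if "l \<in> S" "m \<in> S" "l \<noteq> m" for l m
    using eig_orth[OF fin EV deg _ _ that(3)] \<phi>p[OF that(1)] \<phi>p[OF that(2)] by blast
  have inj: "inj_on \<phi> S"
  proof (rule inj_onI)
    fix l m assume "l \<in> S" "m \<in> S" "\<phi> l = \<phi> m"
    then show "l = m" using pos[of l] orth[of l m] by (metis less_irrefl)
  qed
  have ind: "fvs.independent (\<phi> ` S)"
    unfolding fvs.independent_explicit_finite_subsets
  proof (intro allI impI ballI)
    fix T u w
    assume T: "T \<subseteq> \<phi> ` S" "finite T" and sum0: "(\<Sum>v\<in>T. (\<lambda>x. u v * v x)) = 0" and w: "w \<in> T"
    have "0 = ipD V E (\<Sum>v\<in>T. (\<lambda>x. u v * v x)) w" using sum0 unfolding ipD_def by simp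
    also have "\<dots> = (\<Sum>t\<in>T. u t * ipD V E t w)"
      unfolding ipD_def sum_fun_app by (simp add: sum_distrib_left sum_distrib_right algebra_simps sum.swap[of _ V])
    also have "\<dots> = u w * ipD V E w w + (\<Sum>t\<in>T - {w}. u t * ipD V E t w)"
      using T w by (simp add: sum.remove)
    also have "(\<Sum>t\<in>T - {w}. u t * ipD V E t w) = 0"
    proof (intro sum.neutral ballI)
      fix t assume t: "t \<in> T - {w}"
      then obtain l m where "l \<in> S" "m \<in> S" "t = \<phi> l" "w = \<phi> m" using T w by blast
      then show "u t * ipD V E t w = 0" using orth[of l m] t by auto
    qed
    finally have "u w * ipD V E w w = 0" by simp
    moreover have "ipD V E w w > 0" using T w pos by blast
    ultimately show "u w = 0" by simp
  qed
  define \<delta> where "\<delta> v = (\<lambda>x. if x = v then 1 else (0::real))" for v :: 'a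
  have sp: "\<phi> ` S \<subseteq> fvs.span (\<delta> ` V)"
  proof
    fix f assume "f \<in> \<phi> ` S"
    then have f0: "f x = 0" if "x \<notin> V" for x using that by (auto simp: \<phi>_def)
    have "f = (\<Sum>v\<in>V. (\<lambda>x. f v * \<delta> v x))"
    proof
      fix x
      show "f x = (\<Sum>v\<in>V. (\<lambda>x. f v * \<delta> v x)) x"
        unfolding sum_fun_app using fin f0[of x] by (cases "x \<in> V") (auto simp: \<delta>_def if_distrib cong: if_cong)
    qed
    also have "\<dots> \<in> fvs.span (\<delta> ` V)"
      by (intro fvs.span_sum fvs.span_scale fvs.span_base) auto
    finally show "f \<in> fvs.span (\<delta> ` V)" .
  qed
  have "finite (\<phi> ` S)" using fvs.independent_span_bound[OF _ ind sp] fin by blast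
  then show ?thesis using finite_imageD[OF _ inj] unfolding S_def by blast
qed


theorem mainTheorem10:
  fixes V :: "'a set" and E :: "'a set set" and c :: nat
  assumes "c \<ge> 2"
    and "hypergraph V E"
    and "uniform c E"
    and "E \<noteq> {}"
    and "\<forall>v\<in>V. hdeg E v \<ge> 1"
    and "real (strong_chromatic V E)
           = (real c - lambda_min V E) / (1 - lambda_min V E)"
  shows "\<forall>col. proper_strong_coloring V E (strong_chromatic V E) col \<longrightarrow>
           (\<forall>v\<in>V. \<forall>i\<in>{1..strong_chromatic V E}.
              real (card {e\<in>E. v \<in> e \<and> e \<inter> {u\<in>V. col u = i} \<noteq> {}})
              = (if v \<notin> {u\<in>V. col u = i}
                 then (real c - 1) * real (hdeg E v) / (real (strong_chromatic V E) - 1)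
                 else real (hdeg E v)))"
proof (intro allI impI ballI)
  fix col v i
  assume col: "proper_strong_coloring V E (strong_chromatic V E) col"
    and v: "v \<in> V" and i: "i \<in> {1..strong_chromatic V E}"
  define k where "k = strong_chromatic V E"
  define lam0 where "lam0 = lambda_min V E"
  have fin: "finite V" and EV: "E \<subseteq> Pow V" using assms(2) unfolding hypergraph_def by auto
  have fE: "finite E" using fin EV by (meson finite_Pow_iff finite_subset)
  have deg: "\<forall>v\<in>V. hdeg E v \<ge> 1" by (rule assms(5))
  have cardE: "card e = c" if "e \<in> E" for e using assms(3) that unfolding uniform_def by auto
  have eV: "e \<subseteq> V" if "e \<in> E" for e using EV that by auto
  have fe: "finite e" if "e \<in> E" for e using eV[OF that] fin by (rule finite_subset)
  have colr: "col x \<in> {1..k}" if "x \<in> V" for x using col that unfolding proper_strong_coloring_def k_def by auto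
  have inj: "inj_on col e" if "e \<in> E" for e
    using col that unfolding proper_strong_coloring_def inj_on_def by blast
  have cole: "card (col ` e) = c" if "e \<in> E" for e
    using card_image[OF inj[OF that]] cardE[OF that] by simp
  have colek: "col ` e \<subseteq> {1..k}" if "e \<in> E" for e using colr eV[OF that] by auto
  obtain e0 where e0: "e0 \<in> E" using assms(4) by auto
  have ck: "c \<le> k" using card_mono[OF _ colek[OF e0]] cole[OF e0] by simp
  have k2: "real k \<ge> 2" using ck assms(1) by simp
  have "V \<noteq> {}" using e0 eV[OF e0] cardE[OF e0] assms(1) by auto
  have finS: "finite {l. is_eigenvalue V E l}" by (rule eig_finite[OF fin EV deg])
  obtain \<mu> where mu: "is_eigenvalue V E \<mu>" "\<And>f. Qf E f \<ge> \<mu> * Df V E f"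
    using exists_min_eig[OF fin EV deg \<open>V \<noteq> {}\<close>] by blast
  have "lam0 \<le> \<mu>" unfolding lam0_def lambda_min_def using finS mu(1) by (simp add: Min_le)
  then have ge: "Qf E f \<ge> lam0 * Df V E f" for f
    using mu(2)[of f] Df_nonneg[of V E f] by (smt (verit) mult_right_mono)
  have hyp: "real k = (real c - lam0) / (1 - lam0)" using assms(6) unfolding k_def lam0_def .
  have "lam0 \<noteq> 1" using hyp k2 by auto
  then have lam: "lam0 * (real k - 1) = real k - real c" using hyp by (simp add: field_simps)
  define f where "f j x = (if col x = j then real k - 1 else -1)" for j x
  define xi where "xi j e = (if \<exists>u\<in>e. col u = j then 1 else (0::real))" for j e
  have cardj: "card {w\<in>e. col w = j} = (if \<exists>u\<in>e. col u = j then 1 else 0)" if "e \<in> E" for e j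
  proof (cases "\<exists>u\<in>e. col u = j")
    case True
    then obtain u where u: "u \<in> e" "col u = j" by blast
    have "{w\<in>e. col w = j} = {u}" using u inj[OF that] unfolding inj_on_def by auto
    then show ?thesis using True by simp
  next
    case False
    then have E0: "{w\<in>e. col w = j} = {}" by auto
    show ?thesis using False unfolding E0 by simp
  qed
  have sEf: "sE (f j) e = real k * xi j e - real c" if "e \<in> E" for e j
  proof -
    have "sE (f j) e = (\<Sum>w\<in>e. real k * (if col w = j then 1 else 0) - 1)"
      unfolding sE_def f_def by (rule sum.cong) auto
    also have "\<dots> = real k * (\<Sum>w\<in>e. (if col w = j then 1 else 0)) - real (card e)"
      by (simp add: sum_subtractf sum_distrib_left)
    also have "(\<Sum>w\<in>e. (if col w = j then 1 else (0::real))) = real (card {w\<in>e. col w = j})"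
      using fe[OF that] by (simp add: sum.If_cases Int_def)
    also have "\<dots> = xi j e" using cardj[OF that] unfolding xi_def by simp
    finally show ?thesis using cardE[OF that] by simp
  qed
  have sumxi: "(\<Sum>j\<in>{1..k}. xi j e) = real c" if "e \<in> E" for e
  proof -
    have "(\<Sum>j\<in>{1..k}. xi j e) = real (card {j\<in>{1..k}. \<exists>u\<in>e. col u = j})"
      unfolding xi_def by (simp add: sum.If_cases Int_def)
    also have "{j\<in>{1..k}. \<exists>u\<in>e. col u = j} = col ` e" using colek[OF that] by auto
    finally show ?thesis using cole[OF that] by simp
  qed
  have degsum: "(\<Sum>v\<in>V. real (hdeg E v)) = real c * real (card E)"
  proof -
    have "(\<Sum>v\<in>V. real (hdeg E v)) = (\<Sum>v\<in>V. \<Sum>e\<in>{e\<in>E. v \<in> e}. (1::real))"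
      unfolding hdeg_def by simp
    also have "\<dots> = (\<Sum>e\<in>E. \<Sum>v\<in>e. (1::real))" by (rule inc_swap[OF fin EV])
    also have "\<dots> = (\<Sum>e\<in>E. real c)" using cardE by simp
    finally show ?thesis by simp
  qed
  have sumQ: "(\<Sum>j\<in>{1..k}. Qf E (f j)) = real (card E) * real c * real k * (real k - real c)"
  proof -
    have "(\<Sum>j\<in>{1..k}. Qf E (f j)) = (\<Sum>e\<in>E. \<Sum>j\<in>{1..k}. (real k * xi j e - real c)^2)"
      unfolding Qf_def by (subst sum.swap) (intro sum.cong refl, simp add: sEf)
    also have "\<dots> = (\<Sum>e\<in>E. \<Sum>j\<in>{1..k}. ((real k)^2 - 2 * real k * real c) * xi j e + (real c)^2)"
      by (intro sum.cong refl) (simp add: xi_def power2_eq_square algebra_simps)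
    also have "\<dots> = (\<Sum>e\<in>E. ((real k)^2 - 2 * real k * real c) * real c + real k * (real c)^2)"
    proof (intro sum.cong refl)
      fix e assume e: "e \<in> E"
      have "(\<Sum>j\<in>{1..k}. ((real k)^2 - 2 * real k * real c) * xi j e + (real c)^2)
          = ((real k)^2 - 2 * real k * real c) * (\<Sum>j\<in>{1..k}. xi j e) + real k * (real c)^2"
        by (simp add: sum.distrib sum_distrib_left)
      then show "(\<Sum>j\<in>{1..k}. ((real k)^2 - 2 * real k * real c) * xi j e + (real c)^2)
          = ((real k)^2 - 2 * real k * real c) * real c + real k * (real c)^2"
        unfolding sumxi[OF e] .
    qed
    also have "\<dots> = real (card E) * real c * real k * (real k - real c)"
      by (simp add: power2_eq_square algebra_simps)
    finally show ?thesis .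
  qed
  have sumD: "(\<Sum>j\<in>{1..k}. Df V E (f j)) = real c * real (card E) * real k * (real k - 1)"
  proof -
    have "(\<Sum>j\<in>{1..k}. Df V E (f j)) = (\<Sum>v\<in>V. real (hdeg E v) * (\<Sum>j\<in>{1..k}. (f j v)^2))"
      unfolding Df_def by (subst sum.swap) (simp add: sum_distrib_left)
    also have "\<dots> = (\<Sum>v\<in>V. real (hdeg E v) * (real k * (real k - 1)))"
    proof (intro sum.cong refl)
      fix x assume x: "x \<in> V"
      have "(\<Sum>j\<in>{1..k}. (f j x)^2) = (\<Sum>j\<in>{1..k}. 1 + (if j = col x then (real k - 1)^2 - 1 else 0))"
        unfolding f_def by (intro sum.cong refl) auto
      also have "\<dots> = real k + ((real k - 1)^2 - 1)"
        using colr[OF x] by (simp add: sum.distrib)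
      also have "\<dots> = real k * (real k - 1)" by (simp add: power2_eq_square algebra_simps)
      finally show "real (hdeg E x) * (\<Sum>j\<in>{1..k}. (f j x)^2) = real (hdeg E x) * (real k * (real k - 1))"
        by simp
    qed
    also have "\<dots> = (\<Sum>v\<in>V. real (hdeg E v)) * (real k * (real k - 1))" by (simp add: sum_distrib_right)
    finally show ?thesis using degsum by simp
  qed
  have "(\<Sum>j\<in>{1..k}. Qf E (f j) - lam0 * Df V E (f j)) = 0"
    using sumQ sumD lam by (simp add: sum_subtractf sum_distrib_left[symmetric])
  then have "\<forall>j\<in>{1..k}. Qf E (f j) - lam0 * Df V E (f j) = 0"
    using sum_nonneg_eq_0_iff[of "{1..k}" "\<lambda>j. Qf E (f j) - lam0 * Df V E (f j)"] ge by simp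
  then have eqi: "Qf E (f i) = lam0 * Df V E (f i)" using i unfolding k_def by simp
  have var: "(\<Sum>e\<in>{e\<in>E. v \<in> e}. sE (f i) e) = lam0 * real (hdeg E v) * f i v"
    by (rule variational[OF fin EV ge eqi v])
  define N where "N = card {e\<in>E. v \<in> e \<and> (\<exists>u\<in>e. col u = i)}"
  have setN: "{e\<in>E. v \<in> e \<and> e \<inter> {u\<in>V. col u = i} \<noteq> {}} = {e\<in>E. v \<in> e \<and> (\<exists>u\<in>e. col u = i)}"
    using eV by blast
  have "(\<Sum>e\<in>{e\<in>E. v \<in> e}. sE (f i) e) = real k * real N - real c * real (hdeg E v)"
  proof -
    have "(\<Sum>e\<in>{e\<in>E. v \<in> e}. sE (f i) e) = (\<Sum>e\<in>{e\<in>E. v \<in> e}. real k * xi i e - real c)"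
      by (intro sum.cong refl) (simp add: sEf)
    also have "\<dots> = real k * (\<Sum>e\<in>{e\<in>E. v \<in> e}. xi i e) - real c * real (hdeg E v)"
      by (simp add: sum_subtractf sum_distrib_left hdeg_def)
    also have "(\<Sum>e\<in>{e\<in>E. v \<in> e}. xi i e) = real N"
    proof -
      have "(\<Sum>e\<in>{e\<in>E. v \<in> e}. xi i e) = real (card {e\<in>{e\<in>E. v \<in> e}. \<exists>u\<in>e. col u = i})"
        unfolding xi_def using fE by (simp add: sum.If_cases Int_def)
      also have "{e\<in>{e\<in>E. v \<in> e}. \<exists>u\<in>e. col u = i} = {e\<in>E. v \<in> e \<and> (\<exists>u\<in>e. col u = i)}" by auto
      finally show ?thesis unfolding N_def .
    qed
    finally show ?thesis .
  qed
  with var have key: "real k * real N - real c * real (hdeg E v) = lam0 * real (hdeg E v) * f i v" by simp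
  show "real (card {e\<in>E. v \<in> e \<and> e \<inter> {u\<in>V. col u = i} \<noteq> {}})
              = (if v \<notin> {u\<in>V. col u = i}
                 then (real c - 1) * real (hdeg E v) / (real (strong_chromatic V E) - 1)
                 else real (hdeg E v))"
  proof (cases "col v = i")
    case True
    have "{e\<in>E. v \<in> e \<and> (\<exists>u\<in>e. col u = i)} = {e\<in>E. v \<in> e}" using True by auto
    then show ?thesis using True v setN unfolding hdeg_def by simp
  next
    case False
    have "real k * real N = real (hdeg E v) * (real c - lam0)"
      using key False unfolding f_def by (simp add: algebra_simps)
    then have "real k * real N * (real k - 1) = real (hdeg E v) * (real c - lam0) * (real k - 1)"
      by simp
    also have "\<dots> = real (hdeg E v) * (real c * (real k - 1) - lam0 * (real k - 1))"
      by (simp add: algebra_simps)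
    also have "\<dots> = real (hdeg E v) * (real k * (real c - 1))" unfolding lam by (simp add: algebra_simps)
    finally have "real N * (real k - 1) = real (hdeg E v) * (real c - 1)" using k2 by simp
    then have "real N = (real c - 1) * real (hdeg E v) / (real k - 1)" using k2 by (simp add: field_simps)
    then show ?thesis using False v setN unfolding N_def k_def by simp
  qed
qed

end
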